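(* Let $w\in W$ and $\alpha\in\Phi^+$ with $s_\alpha w>w$ and $\ell(s_\alpha w)=\ell(w)+1$. Then, counted with multiplicity, the residues modulo the ideal $\langle\alpha\rangle$ of $\mathbb{C}[\alpha_1,\ldots,\alpha_r]$ of the elements of $\mathrm{Inv}(s_\alpha w)$ coincide with the residues of $\{\alpha\}\cup s_\alpha\,\mathrm{Inv}(w)$. That is, $\mathrm{Inv}(s_\alpha w)=\{\alpha\}\cup s_\alpha\mathrm{Inv}(w)\bmod(\alpha)$ with multiplicity.
   Context: $G$ is a complex reductive linear algebraic group, $B$ is a Borel subgroup, $T\subseteq B$ is a maximal torus, and $W=N(T)/T$ is the Weyl group, with root system $\Phi=\Phi^+\sqcup\Phi^-$ and simple roots $\alpha_1,\ldots,\alpha_r$. Roots are viewed as linear forms in $\mathbb{C}[\alpha_1,\ldots,\alpha_r]$. $s_\alpha$ is the reflection associated to $\alpha\in\Phi^+$, $\ell$ is the length function, and $\le$ is the Bruhat order. The inversion set is $\mathrm{Inv}(w)=\Phi^+\cap w\Phi^-$. *)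

theory Defs
  imports "HOL-Analysis.Analysis" "HOL-Library.Multiset"
begin

definition rrefl :: "'a::real_inner \<Rightarrow> 'a \<Rightarrow> 'a" where
  "rrefl \<alpha> v = v - (2 * (v \<bullet> \<alpha>) / (\<alpha> \<bullet> \<alpha>)) *\<^sub>R \<alpha>"

definition root_system :: "'a::euclidean_space set \<Rightarrow> bool" where
  "root_system \<Phi> \<longleftrightarrow> finite \<Phi> \<and> 0 \<notin> \<Phi>
     \<and> (\<forall>\<alpha>\<in>\<Phi>. rrefl \<alpha> ` \<Phi> = \<Phi>)
     \<and> (\<forall>\<alpha>\<in>\<Phi>. \<forall>\<beta>\<in>\<Phi>. 2 * (\<beta> \<bullet> \<alpha>) / (\<alpha> \<bullet> \<alpha>) \<in> \<int>)
     \<and> (\<forall>\<alpha>\<in>\<Phi>. \<forall>c::real. c *\<^sub>R \<alpha> \<in> \<Phi> \<longrightarrow> c = 1 \<or> c = -1)"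

definition simple_system :: "'a::euclidean_space set \<Rightarrow> 'a set \<Rightarrow> bool" where
  "simple_system \<Phi> \<Delta> \<longleftrightarrow> \<Delta> \<subseteq> \<Phi> \<and> independent \<Delta>
     \<and> (\<forall>\<beta>\<in>\<Phi>. \<exists>c::'a \<Rightarrow> real. (\<forall>\<delta>\<in>\<Delta>. c \<delta> \<in> \<int>)
            \<and> \<beta> = (\<Sum>\<delta>\<in>\<Delta>. c \<delta> *\<^sub>R \<delta>)
            \<and> ((\<forall>\<delta>\<in>\<Delta>. c \<delta> \<ge> 0) \<or> (\<forall>\<delta>\<in>\<Delta>. c \<delta> \<le> 0)))"

definition positive_roots :: "'a::euclidean_space set \<Rightarrow> 'a set \<Rightarrow> 'a set" where
  "positive_roots \<Phi> \<Delta> = {\<beta>\<in>\<Phi>. \<exists>c::'a \<Rightarrow> real. (\<forall>\<delta>\<in>\<Delta>. c \<delta> \<ge> 0)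
            \<and> \<beta> = (\<Sum>\<delta>\<in>\<Delta>. c \<delta> *\<^sub>R \<delta>)}"

definition negative_roots :: "'a::euclidean_space set \<Rightarrow> 'a set \<Rightarrow> 'a set" where
  "negative_roots \<Phi> \<Delta> = uminus ` positive_roots \<Phi> \<Delta>"

inductive_set weyl_group :: "'a::euclidean_space set \<Rightarrow> ('a \<Rightarrow> 'a) set" for \<Phi> where
  weyl_id: "id \<in> weyl_group \<Phi>"
| weyl_step: "\<alpha> \<in> \<Phi> \<Longrightarrow> w \<in> weyl_group \<Phi> \<Longrightarrow> rrefl \<alpha> \<circ> w \<in> weyl_group \<Phi>"

definition wlen :: "'a::euclidean_space set \<Rightarrow> ('a \<Rightarrow> 'a) \<Rightarrow> nat" where
  "wlen \<Delta> w = (LEAST n. \<exists>ds. length ds = n \<and> set ds \<subseteq> \<Delta>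
                         \<and> w = foldr (\<lambda>\<delta> f. rrefl \<delta> \<circ> f) ds id)"

definition bruhat_le :: "'a::euclidean_space set \<Rightarrow> 'a set \<Rightarrow> ('a \<Rightarrow> 'a) \<Rightarrow> ('a \<Rightarrow> 'a) \<Rightarrow> bool" where
  "bruhat_le \<Phi> \<Delta> x y \<longleftrightarrow>
     (x, y) \<in> {(u, rrefl \<beta> \<circ> u) | u \<beta>. u \<in> weyl_group \<Phi> \<and> \<beta> \<in> positive_roots \<Phi> \<Delta>
                  \<and> wlen \<Delta> u < wlen \<Delta> (rrefl \<beta> \<circ> u)}\<^sup>*"

definition bruhat_less :: "'a::euclidean_space set \<Rightarrow> 'a set \<Rightarrow> ('a \<Rightarrow> 'a) \<Rightarrow> ('a \<Rightarrow> 'a) \<Rightarrow> bool" where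
  "bruhat_less \<Phi> \<Delta> x y \<longleftrightarrow> bruhat_le \<Phi> \<Delta> x y \<and> x \<noteq> y"

definition inv_set :: "'a::euclidean_space set \<Rightarrow> 'a set \<Rightarrow> ('a \<Rightarrow> 'a) \<Rightarrow> 'a set" where
  "inv_set \<Phi> \<Delta> w = positive_roots \<Phi> \<Delta> \<inter> w ` negative_roots \<Phi> \<Delta>"

text \<open>Residue of a linear form beta modulo the ideal generated by the linear form alpha:
  two linear forms are congruent iff their difference is a scalar multiple of alpha.\<close>
definition residue :: "'a::real_vector \<Rightarrow> 'a \<Rightarrow> 'a set" where
  "residue \<alpha> \<beta> = {\<beta> + c *\<^sub>R \<alpha> | c. True}"

end

theory Submission
  imports Defs
begin

lemma rrefl_alt: "rrefl a v = v - (2 * (v \<bullet> a) / (a \<bullet> a)) *\<^sub>R a"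
  by (simp add: rrefl_def)

lemma rrefl_invol[simp]: "a \<noteq> 0 \<Longrightarrow> rrefl a (rrefl a v) = v"
  by (simp add: rrefl_def inner_diff_left algebra_simps)

lemma rrefl_self[simp]: "a \<noteq> 0 \<Longrightarrow> rrefl a a = - a"
  by (simp add: rrefl_def algebra_simps scaleR_2)

lemma rrefl_neg_root[simp]: "rrefl (- a) = rrefl a"
  by (rule ext) (simp add: rrefl_def)

lemma linear_rrefl: "linear (rrefl a)"
  unfolding rrefl_def
  by (rule linearI) (auto simp: inner_add_left algebra_simps add_divide_distrib scaleR_add_left scaleR_diff_left)

lemma rrefl_neg: "rrefl a (- v) = - rrefl a v"
  by (simp add: rrefl_def)

lemma rrefl_inner: "rrefl a u \<bullet> rrefl a v = u \<bullet> v"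
  by (cases "a = 0") (auto simp: rrefl_def inner_diff_left inner_diff_right algebra_simps inner_commute)

lemma rrefl_conj: "a \<noteq> 0 \<Longrightarrow> rrefl (rrefl a b) (rrefl a v) = rrefl a (rrefl b v)"
proof -
  assume a: "a \<noteq> 0"
  have "rrefl (rrefl a b) (rrefl a v) = rrefl a v - (2 * (rrefl a v \<bullet> rrefl a b) / (rrefl a b \<bullet> rrefl a b)) *\<^sub>R rrefl a b"
    by (simp add: rrefl_def)
  also have "\<dots> = rrefl a v - (2 * (v \<bullet> b) / (b \<bullet> b)) *\<^sub>R rrefl a b"
    by (simp add: rrefl_inner)
  also have "\<dots> = rrefl a (v - (2 * (v \<bullet> b) / (b \<bullet> b)) *\<^sub>R b)"
    using linear_rrefl[of a] by (simp add: linear_diff linear_scale)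
  finally show ?thesis by (simp add: rrefl_def[of b])
qed

lemma rrefl_conj_fun: "a \<noteq> 0 \<Longrightarrow> rrefl (rrefl a b) \<circ> rrefl a = rrefl a \<circ> rrefl b"
  by (rule ext) (simp add: rrefl_conj)

lemma inj_rrefl: "a \<noteq> 0 \<Longrightarrow> inj (rrefl a)"
  by (metis injI rrefl_invol)

definition wd :: "'a::euclidean_space list \<Rightarrow> 'a \<Rightarrow> 'a" where
  "wd ds = foldr (\<lambda>\<delta> f. rrefl \<delta> \<circ> f) ds id"

lemma wd_Nil[simp]: "wd [] = id" and wd_Cons[simp]: "wd (d # ds) = rrefl d \<circ> wd ds"
  by (simp_all add: wd_def)

lemma wd_append: "wd (xs @ ys) = wd xs \<circ> wd ys"
  by (induction xs) (auto simp: wd_def)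


locale RS =
  fixes \<Phi> \<Delta> :: "'a::euclidean_space set"
  assumes rs: "root_system \<Phi>" and ss: "simple_system \<Phi> \<Delta>"
begin

abbreviation "P \<equiv> positive_roots \<Phi> \<Delta>"
abbreviation "N \<equiv> negative_roots \<Phi> \<Delta>"

definition pc :: "'a \<Rightarrow> bool" where
  "pc v \<longleftrightarrow> (\<exists>c. (\<forall>\<delta>\<in>\<Delta>. 0 \<le> c \<delta>) \<and> v = (\<Sum>\<delta>\<in>\<Delta>. c \<delta> *\<^sub>R \<delta>))"

lemma finPhi: "finite \<Phi>" and zero_notin: "0 \<notin> \<Phi>"
  and refl_Phi: "\<alpha> \<in> \<Phi> \<Longrightarrow> rrefl \<alpha> ` \<Phi> = \<Phi>"
  and reduced: "\<alpha> \<in> \<Phi> \<Longrightarrow> c *\<^sub>R \<alpha> \<in> \<Phi> \<Longrightarrow> c = 1 \<or> c = -1"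
  using rs unfolding root_system_def by blast+

lemma Delta_sub: "\<Delta> \<subseteq> \<Phi>" and indep: "independent \<Delta>"
  using ss unfolding simple_system_def by blast+

lemma finDelta: "finite \<Delta>"
  using independent_bound indep by blast

lemma nz: "\<alpha> \<in> \<Phi> \<Longrightarrow> \<alpha> \<noteq> 0" using zero_notin by blast

lemma refl_mem: "\<alpha> \<in> \<Phi> \<Longrightarrow> \<beta> \<in> \<Phi> \<Longrightarrow> rrefl \<alpha> \<beta> \<in> \<Phi>"
  using refl_Phi by blast

lemma neg_mem: "\<alpha> \<in> \<Phi> \<Longrightarrow> - \<alpha> \<in> \<Phi>"
  using refl_mem[of \<alpha> \<alpha>] nz by simp

lemma P_def': "P = {\<beta>\<in>\<Phi>. pc \<beta>}"
  unfolding positive_roots_def pc_def by auto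

lemma N_iff: "x \<in> N \<longleftrightarrow> - x \<in> P"
  unfolding negative_roots_def by (metis image_iff minus_minus)

lemma indep_zero:
  assumes "(\<Sum>\<delta>\<in>\<Delta>. e \<delta> *\<^sub>R \<delta>) = 0" "\<gamma> \<in> \<Delta>" shows "e \<gamma> = 0"
  using indep dependent_finite[OF finDelta] assms by auto

lemma indep_uniq:
  assumes "(\<Sum>\<delta>\<in>\<Delta>. a \<delta> *\<^sub>R \<delta>) = (\<Sum>\<delta>\<in>\<Delta>. b \<delta> *\<^sub>R \<delta>)" "\<gamma> \<in> \<Delta>" shows "a \<gamma> = b \<gamma>"
proof -
  have "(\<Sum>\<delta>\<in>\<Delta>. (a \<delta> - b \<delta>) *\<^sub>R \<delta>) = 0"
    using assms(1) by (simp add: scaleR_diff_left sum_subtractf)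
  from indep_zero[OF this assms(2)] show ?thesis by simp
qed

lemma pc_add: "pc u \<Longrightarrow> pc v \<Longrightarrow> pc (u + v)"
  unfolding pc_def
proof (elim exE conjE)
  fix c d assume "\<forall>\<delta>\<in>\<Delta>. 0 \<le> c \<delta>" "u = (\<Sum>\<delta>\<in>\<Delta>. c \<delta> *\<^sub>R \<delta>)" "\<forall>\<delta>\<in>\<Delta>. 0 \<le> d \<delta>" "v = (\<Sum>\<delta>\<in>\<Delta>. d \<delta> *\<^sub>R \<delta>)"
  then show "\<exists>c. (\<forall>\<delta>\<in>\<Delta>. 0 \<le> c \<delta>) \<and> u + v = (\<Sum>\<delta>\<in>\<Delta>. c \<delta> *\<^sub>R \<delta>)"
    by (intro exI[of _ "\<lambda>\<delta>. c \<delta> + d \<delta>"]) (simp add: scaleR_add_left sum.distrib)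
qed

lemma pc_scale: "pc u \<Longrightarrow> 0 \<le> k \<Longrightarrow> pc (k *\<^sub>R u)"
  unfolding pc_def
proof (elim exE conjE)
  fix c assume "\<forall>\<delta>\<in>\<Delta>. 0 \<le> c \<delta>" "u = (\<Sum>\<delta>\<in>\<Delta>. c \<delta> *\<^sub>R \<delta>)" "0 \<le> k"
  then show "\<exists>c. (\<forall>\<delta>\<in>\<Delta>. 0 \<le> c \<delta>) \<and> k *\<^sub>R u = (\<Sum>\<delta>\<in>\<Delta>. c \<delta> *\<^sub>R \<delta>)"
    by (intro exI[of _ "\<lambda>\<delta>. k * c \<delta>"]) (simp add: scaleR_sum_right)
qed

lemma pc_Delta: assumes "\<delta> \<in> \<Delta>" shows "pc \<delta>"
proof -
  have "(\<Sum>\<gamma>\<in>\<Delta>. (if \<gamma> = \<delta> then 1 else 0) *\<^sub>R \<gamma>) = (\<Sum>\<gamma>\<in>\<Delta>. if \<gamma> = \<delta> then \<gamma> else 0)"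
    by (rule sum.cong) auto
  also have "\<dots> = \<delta>" using assms finDelta by (simp add: sum.delta')
  finally show ?thesis unfolding pc_def
    by (intro exI[of _ "\<lambda>\<gamma>. if \<gamma> = \<delta> then 1 else 0"]) auto
qed

lemma pc_antisym: assumes "pc v" "pc (- v)" shows "v = 0"
proof -
  obtain c d where c: "\<forall>\<delta>\<in>\<Delta>. 0 \<le> c \<delta>" "v = (\<Sum>\<delta>\<in>\<Delta>. c \<delta> *\<^sub>R \<delta>)"
    and d: "\<forall>\<delta>\<in>\<Delta>. 0 \<le> d \<delta>" "- v = (\<Sum>\<delta>\<in>\<Delta>. d \<delta> *\<^sub>R \<delta>)"
    using assms unfolding pc_def by blast
  have "(\<Sum>\<delta>\<in>\<Delta>. (c \<delta> + d \<delta>) *\<^sub>R \<delta>) = 0"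
    using c(2) d(2) by (simp add: scaleR_add_left sum.distrib flip: c(2) d(2))
  then have "\<forall>\<delta>\<in>\<Delta>. c \<delta> = 0" using indep_zero c d by (metis add_nonneg_eq_0_iff)
  then show ?thesis using c(2) by simp
qed

lemma Phi_split: "\<beta> \<in> \<Phi> \<Longrightarrow> \<beta> \<in> P \<or> \<beta> \<in> N"
proof -
  assume b: "\<beta> \<in> \<Phi>"
  then obtain c where c: "\<beta> = (\<Sum>\<delta>\<in>\<Delta>. c \<delta> *\<^sub>R \<delta>)" "(\<forall>\<delta>\<in>\<Delta>. c \<delta> \<ge> 0) \<or> (\<forall>\<delta>\<in>\<Delta>. c \<delta> \<le> 0)"
    using ss unfolding simple_system_def by blast
  show ?thesis
  proof (cases "\<forall>\<delta>\<in>\<Delta>. c \<delta> \<ge> 0")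
    case True
    then have "pc \<beta>" unfolding pc_def using c(1) by (intro exI[of _ c]) simp
    then show ?thesis using b by (simp add: P_def')
  next
    case False
    then have "\<forall>\<delta>\<in>\<Delta>. - c \<delta> \<ge> 0" using c by auto
    moreover have "- \<beta> = (\<Sum>\<delta>\<in>\<Delta>. (- c \<delta>) *\<^sub>R \<delta>)" unfolding c(1) by (simp only: scaleR_minus_left sum_negf)
    ultimately have "pc (- \<beta>)" unfolding pc_def by (intro exI[of _ "\<lambda>\<delta>. - c \<delta>"]) simp
    then have "- \<beta> \<in> P" using neg_mem[OF b] unfolding P_def' by simp
    then show ?thesis by (simp add: N_iff)
  qed
qed

lemma PN_disj: "x \<in> P \<Longrightarrow> x \<in> N \<Longrightarrow> False"
  using pc_antisym zero_notin unfolding N_iff P_def' by fastforce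

lemma P_sub: "P \<subseteq> \<Phi>" unfolding P_def' by auto
lemma N_sub: "N \<subseteq> \<Phi>" using P_sub neg_mem N_iff by (metis minus_minus subsetI subsetD)

lemma Delta_P: "\<Delta> \<subseteq> P" using Delta_sub pc_Delta unfolding P_def' by auto

lemma pc_in_P: "\<beta> \<in> \<Phi> \<Longrightarrow> pc \<beta> \<Longrightarrow> \<beta> \<in> P" unfolding P_def' by auto
lemma pcneg_in_N: "\<beta> \<in> \<Phi> \<Longrightarrow> pc (- \<beta>) \<Longrightarrow> \<beta> \<in> N" unfolding N_iff P_def' using neg_mem by auto
lemma P_pc: "\<beta> \<in> P \<Longrightarrow> pc \<beta>" unfolding P_def' by auto

end

context RS begin

abbreviation "W \<equiv> weyl_group \<Phi>"

lemma W_props: "w \<in> W \<Longrightarrow> linear w \<and> inj w \<and> w ` \<Phi> = \<Phi>"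
proof (induction rule: weyl_group.induct)
  case weyl_id then show ?case by (auto intro!: linearI)
next
  case (weyl_step a w)
  have "linear (rrefl a \<circ> w)" using weyl_step linear_rrefl linear_compose by blast
  moreover have "inj (rrefl a \<circ> w)" using weyl_step inj_rrefl nz by (metis inj_compose)
  moreover have "(rrefl a \<circ> w) ` \<Phi> = \<Phi>"
  proof -
    have "(rrefl a \<circ> w) ` \<Phi> = rrefl a ` (w ` \<Phi>)" by (rule image_comp[symmetric])
    then show ?thesis using weyl_step refl_Phi by simp
  qed
  ultimately show ?case by blast
qed

lemma W_lin: "w \<in> W \<Longrightarrow> linear w" using W_props by blast
lemma W_inj: "w \<in> W \<Longrightarrow> inj w" using W_props by blast
lemma W_img: "w \<in> W \<Longrightarrow> w ` \<Phi> = \<Phi>" using W_props by blast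

lemma W_neg: "w \<in> W \<Longrightarrow> w (- x) = - w x" using W_lin linear_neg by blast

lemma W_P_or_N: assumes "w \<in> W" "a \<in> \<Phi>"
  shows "(a \<in> w ` P \<or> a \<in> w ` N) \<and> \<not> (a \<in> w ` P \<and> a \<in> w ` N)"
proof -
  obtain y where y: "y \<in> \<Phi>" "a = w y" using assms W_img by (metis imageE)
  have 1: "a \<in> w ` P \<or> a \<in> w ` N" using Phi_split[OF y(1)] y by blast
  have 2: False if h: "a \<in> w ` P" "a \<in> w ` N"
  proof -
    obtain p n where "p \<in> P" "n \<in> N" "w p = w n" using h by (metis imageE)
    then show False using W_inj[OF assms(1)] PN_disj by (metis injD)
  qed
  show ?thesis using 1 2 by blast
qed

lemma W_notN_negN: assumes "w \<in> W" "a \<in> \<Phi>" "a \<notin> w ` N" shows "- a \<in> w ` N"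
proof -
  obtain p where p: "p \<in> P" "a = w p" using W_P_or_N[OF assms(1,2)] assms(3) by blast
  have "- p \<in> N" using p N_iff by simp
  moreover have "w (- p) = - a" using W_neg[OF assms(1)] p by simp
  ultimately show ?thesis by (metis image_eqI)
qed

lemma wd_W: "set ds \<subseteq> \<Phi> \<Longrightarrow> wd ds \<in> W"
  by (induction ds) (auto intro: weyl_group.intros)

lemma P3: assumes d: "\<delta> \<in> \<Delta>" and b: "\<beta> \<in> P" and ne: "\<beta> \<noteq> \<delta>"
  shows "rrefl \<delta> \<beta> \<in> P"
proof (rule ccontr)
  assume nP: "rrefl \<delta> \<beta> \<notin> P"
  have dPhi: "\<delta> \<in> \<Phi>" using d Delta_sub by auto
  have bPhi: "\<beta> \<in> \<Phi>" using b P_sub by auto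
  have mem: "rrefl \<delta> \<beta> \<in> \<Phi>" using refl_mem dPhi bPhi by blast
  then have "rrefl \<delta> \<beta> \<in> N" using nP Phi_split by blast
  then have pcn: "pc (- rrefl \<delta> \<beta>)" using N_iff P_pc by blast
  define k where "k = 2 * (\<beta> \<bullet> \<delta>) / (\<delta> \<bullet> \<delta>)"
  have sb: "rrefl \<delta> \<beta> = \<beta> - k *\<^sub>R \<delta>" by (simp add: rrefl_def k_def)
  obtain c where c: "\<forall>\<gamma>\<in>\<Delta>. 0 \<le> c \<gamma>" "\<beta> = (\<Sum>\<gamma>\<in>\<Delta>. c \<gamma> *\<^sub>R \<gamma>)"
    using P_pc[OF b] unfolding pc_def by blast
  obtain e where e: "\<forall>\<gamma>\<in>\<Delta>. 0 \<le> e \<gamma>" "k *\<^sub>R \<delta> - \<beta> = (\<Sum>\<gamma>\<in>\<Delta>. e \<gamma> *\<^sub>R \<gamma>)"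
    using pcn unfolding pc_def sb by auto
  have "(\<Sum>\<gamma>\<in>\<Delta>. (c \<gamma> + e \<gamma>) *\<^sub>R \<gamma>) = k *\<^sub>R \<delta>"
    by (simp add: scaleR_add_left sum.distrib flip: c(2) e(2))
  also have "\<dots> = (\<Sum>\<gamma>\<in>\<Delta>. (if \<gamma> = \<delta> then k else 0) *\<^sub>R \<gamma>)"
  proof -
    have "(\<Sum>\<gamma>\<in>\<Delta>. (if \<gamma> = \<delta> then k else 0) *\<^sub>R \<gamma>) = (\<Sum>\<gamma>\<in>\<Delta>. if \<gamma> = \<delta> then k *\<^sub>R \<gamma> else 0)"
      by (rule sum.cong) auto
    also have "\<dots> = k *\<^sub>R \<delta>" using d finDelta by (simp add: sum.delta')
    finally show ?thesis by simp
  qed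
  finally have eqs: "(\<Sum>\<gamma>\<in>\<Delta>. (c \<gamma> + e \<gamma>) *\<^sub>R \<gamma>) = (\<Sum>\<gamma>\<in>\<Delta>. (if \<gamma> = \<delta> then k else 0) *\<^sub>R \<gamma>)" .
  have eq: "\<forall>\<gamma>\<in>\<Delta>. c \<gamma> + e \<gamma> = (if \<gamma> = \<delta> then k else 0)"
    using indep_uniq[OF eqs] by blast
  have c0: "\<forall>\<gamma>\<in>\<Delta>. \<gamma> \<noteq> \<delta> \<longrightarrow> c \<gamma> = 0"
  proof (intro ballI impI)
    fix \<gamma> assume "\<gamma> \<in> \<Delta>" "\<gamma> \<noteq> \<delta>"
    then show "c \<gamma> = 0" using eq c(1) e(1) by (metis add_nonneg_eq_0_iff)
  qed
  have "\<beta> = (\<Sum>\<gamma>\<in>\<Delta>. if \<gamma> = \<delta> then c \<delta> *\<^sub>R \<delta> else 0)"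
    unfolding c(2) by (rule sum.cong) (use c0 in auto)
  also have "\<dots> = c \<delta> *\<^sub>R \<delta>" using d finDelta by (simp add: sum.delta')
  finally have bc: "\<beta> = c \<delta> *\<^sub>R \<delta>" .
  then have "c \<delta> *\<^sub>R \<delta> \<in> \<Phi>" using bPhi by simp
  then have "c \<delta> = 1 \<or> c \<delta> = -1" using reduced dPhi by blast
  then have "c \<delta> = 1" using c(1) d by force
  then show False using ne bc by simp
qed

end

context RS begin

lemma pc_zero: "pc 0"
  unfolding pc_def by (intro exI[of _ "\<lambda>_. 0"]) simp

lemma exists_pos_inner: assumes b: "\<beta> \<in> P" shows "\<exists>\<delta>\<in>\<Delta>. \<beta> \<bullet> \<delta> > 0"
proof (rule ccontr)
  assume "\<not> ?thesis"
  then have le: "\<forall>\<delta>\<in>\<Delta>. \<beta> \<bullet> \<delta> \<le> 0" by force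
  obtain c where c: "\<forall>\<gamma>\<in>\<Delta>. 0 \<le> c \<gamma>" "\<beta> = (\<Sum>\<gamma>\<in>\<Delta>. c \<gamma> *\<^sub>R \<gamma>)"
    using P_pc[OF b] unfolding pc_def by blast
  have "\<beta> \<bullet> \<beta> = (\<Sum>\<gamma>\<in>\<Delta>. c \<gamma> *\<^sub>R \<gamma>) \<bullet> \<beta>" using c(2) by simp
  also have "\<dots> = (\<Sum>\<gamma>\<in>\<Delta>. c \<gamma> * (\<gamma> \<bullet> \<beta>))" by (simp add: inner_sum_left)
  also have "\<dots> \<le> 0" using c(1) le by (intro sum_nonpos) (simp add: mult_nonneg_nonpos inner_commute)
  finally have "\<beta> = 0" by (metis inner_gt_zero_iff not_less)
  then show False using b P_sub zero_notin by auto
qed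

lemma refl_word: assumes "\<beta> \<in> P" shows "\<exists>ds. set ds \<subseteq> \<Delta> \<and> rrefl \<beta> = wd ds"
  using assms
proof (induction "card {\<gamma>\<in>P. pc (\<beta> - \<gamma>)}" arbitrary: \<beta> rule: less_induct)
  case less
  show ?case
  proof (cases "\<beta> \<in> \<Delta>")
    case True
    then show ?thesis by (intro exI[of _ "[\<beta>]"]) simp
  next
    case False
    obtain \<delta> where d: "\<delta> \<in> \<Delta>" "\<beta> \<bullet> \<delta> > 0" using exists_pos_inner[OF less.prems] by blast
    have dnz: "\<delta> \<noteq> 0" using d(1) Delta_sub nz by auto
    define k where "k = 2 * (\<beta> \<bullet> \<delta>) / (\<delta> \<bullet> \<delta>)"
    have kpos: "k > 0" unfolding k_def using d(2) dnz by simp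
    define \<beta>' where "\<beta>' = rrefl \<delta> \<beta>"
    have b'eq: "\<beta>' = \<beta> - k *\<^sub>R \<delta>" by (simp add: \<beta>'_def rrefl_def k_def)
    have b'P: "\<beta>' \<in> P" unfolding \<beta>'_def using P3 d(1) less.prems False by blast
    have sub: "{\<gamma>\<in>P. pc (\<beta>' - \<gamma>)} \<subset> {\<gamma>\<in>P. pc (\<beta> - \<gamma>)}"
    proof
      show "{\<gamma>\<in>P. pc (\<beta>' - \<gamma>)} \<subseteq> {\<gamma>\<in>P. pc (\<beta> - \<gamma>)}"
      proof safe
        fix \<gamma> assume "\<gamma> \<in> P" "pc (\<beta>' - \<gamma>)"
        moreover have "pc (k *\<^sub>R \<delta>)" using pc_scale pc_Delta d(1) kpos by simp
        ultimately have "pc ((\<beta>' - \<gamma>) + k *\<^sub>R \<delta>)" using pc_add by blast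
        then show "pc (\<beta> - \<gamma>)" by (simp add: b'eq algebra_simps)
      qed
      have "\<beta> \<notin> {\<gamma>\<in>P. pc (\<beta>' - \<gamma>)}"
      proof
        assume "\<beta> \<in> {\<gamma>\<in>P. pc (\<beta>' - \<gamma>)}"
        then have "pc (- (k *\<^sub>R \<delta>))" by (simp add: b'eq)
        moreover have "pc (k *\<^sub>R \<delta>)" using pc_scale pc_Delta d(1) kpos by simp
        ultimately have "k *\<^sub>R \<delta> = 0" using pc_antisym by blast
        then show False using kpos dnz by simp
      qed
      moreover have "\<beta> \<in> {\<gamma>\<in>P. pc (\<beta> - \<gamma>)}" using less.prems pc_zero by simp
      ultimately show "{\<gamma>\<in>P. pc (\<beta>' - \<gamma>)} \<noteq> {\<gamma>\<in>P. pc (\<beta> - \<gamma>)}" by blast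
    qed
    have "finite {\<gamma>\<in>P. pc (\<beta> - \<gamma>)}" by (rule finite_subset[OF _ finite_subset[OF P_sub finPhi]]) auto
    then have "card {\<gamma>\<in>P. pc (\<beta>' - \<gamma>)} < card {\<gamma>\<in>P. pc (\<beta> - \<gamma>)}" using sub psubset_card_mono by blast
    then obtain es where es: "set es \<subseteq> \<Delta>" "rrefl \<beta>' = wd es" using less.hyps b'P by blast
    have "rrefl (rrefl \<delta> \<beta>') \<circ> rrefl \<delta> = rrefl \<delta> \<circ> rrefl \<beta>'" using rrefl_conj_fun dnz by blast
    moreover have "rrefl \<delta> \<beta>' = \<beta>" using dnz by (simp add: \<beta>'_def)
    ultimately have e1: "rrefl \<beta> \<circ> rrefl \<delta> = rrefl \<delta> \<circ> rrefl \<beta>'" by simp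
    have "rrefl \<beta> = rrefl \<beta> \<circ> rrefl \<delta> \<circ> rrefl \<delta>" using dnz by (auto simp: fun_eq_iff)
    also have "\<dots> = rrefl \<delta> \<circ> rrefl \<beta>' \<circ> rrefl \<delta>" using e1 by simp
    also have "\<dots> = wd (\<delta> # es @ [\<delta>])" using es(2) by (simp add: wd_append comp_assoc)
    finally show ?thesis using es(1) d(1) by (intro exI[of _ "\<delta> # es @ [\<delta>]"]) auto
  qed
qed

lemma W_word: "w \<in> W \<Longrightarrow> \<exists>ds. set ds \<subseteq> \<Delta> \<and> w = wd ds"
proof (induction rule: weyl_group.induct)
  case weyl_id then show ?case by (intro exI[of _ "[]"]) simp
next
  case (weyl_step a w)
  then obtain ds where ds: "set ds \<subseteq> \<Delta>" "w = wd ds" by blast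
  have "\<exists>es. set es \<subseteq> \<Delta> \<and> rrefl a = wd es"
  proof (cases "a \<in> P")
    case True then show ?thesis using refl_word by blast
  next
    case False
    then have "- a \<in> P" using Phi_split weyl_step(1) N_iff by blast
    then show ?thesis using refl_word[of "- a"] by simp
  qed
  then obtain es where "set es \<subseteq> \<Delta>" "rrefl a = wd es" by blast
  then show ?case using ds by (intro exI[of _ "es @ ds"]) (simp add: wd_append)
qed

lemma exch: "set ds \<subseteq> \<Delta> \<Longrightarrow> \<beta> \<in> P \<Longrightarrow> \<beta> \<in> wd ds ` N \<Longrightarrow>
   \<exists>es. set es \<subseteq> set ds \<and> length es < length ds \<and> rrefl \<beta> \<circ> wd ds = wd es"
proof (induction ds arbitrary: \<beta>)
  case Nil
  then show ?case using PN_disj by auto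
next
  case (Cons \<epsilon> ds)
  have enz: "\<epsilon> \<noteq> 0" using Cons.prems(1) Delta_sub nz by auto
  show ?case
  proof (cases "\<beta> = \<epsilon>")
    case True
    then show ?thesis using enz by (intro exI[of _ ds]) (auto simp: fun_eq_iff)
  next
    case False
    define \<beta>' where "\<beta>' = rrefl \<epsilon> \<beta>"
    have b'P: "\<beta>' \<in> P" unfolding \<beta>'_def using P3 Cons.prems False by simp
    obtain n where n: "n \<in> N" "\<beta> = rrefl \<epsilon> (wd ds n)" using Cons.prems(3) by auto
    have h: "\<beta>' \<in> wd ds ` N" using n enz by (simp add: \<beta>'_def)
    have sd: "set ds \<subseteq> \<Delta>" using Cons.prems(1) by simp
    obtain es where es: "set es \<subseteq> set ds" "length es < length ds" "rrefl \<beta>' \<circ> wd ds = wd es"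
      using Cons.IH[OF sd b'P h] by blast
    have "rrefl (rrefl \<epsilon> \<beta>') \<circ> rrefl \<epsilon> = rrefl \<epsilon> \<circ> rrefl \<beta>'" using rrefl_conj_fun enz by blast
    moreover have "rrefl \<epsilon> \<beta>' = \<beta>" using enz by (simp add: \<beta>'_def)
    ultimately have e1: "rrefl \<beta> \<circ> rrefl \<epsilon> = rrefl \<epsilon> \<circ> rrefl \<beta>'" by simp
    have "rrefl \<beta> \<circ> wd (\<epsilon> # ds) = rrefl \<epsilon> \<circ> (rrefl \<beta>' \<circ> wd ds)"
      using e1 by (simp add: comp_assoc[symmetric])
    also have "\<dots> = wd (\<epsilon> # es)" using es(3) by simp
    finally have fin: "rrefl \<beta> \<circ> wd (\<epsilon> # ds) = wd (\<epsilon> # es)" .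
    show ?thesis
    proof (intro exI[of _ "\<epsilon> # es"] conjI)
      show "rrefl \<beta> \<circ> wd (\<epsilon> # ds) = wd (\<epsilon> # es)" by (rule fin)
    qed (use es in auto)
  qed
qed

lemma inv_alt: "inv_set \<Phi> \<Delta> w = P \<inter> w ` N" by (simp add: inv_set_def)

lemma fin_inv: "finite (inv_set \<Phi> \<Delta> w)"
  using finPhi P_sub by (metis inv_alt finite_Int finite_subset)

lemma inv_step:
  assumes u: "u \<in> W" and d: "\<delta> \<in> \<Delta>" and nd: "\<delta> \<notin> u ` N"
  shows "inv_set \<Phi> \<Delta> (rrefl \<delta> \<circ> u) = insert \<delta> (rrefl \<delta> ` inv_set \<Phi> \<Delta> u)"
    and "\<delta> \<notin> rrefl \<delta> ` inv_set \<Phi> \<Delta> u"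
proof -
  have dnz: "\<delta> \<noteq> 0" using d Delta_sub nz by auto
  have dP: "\<delta> \<in> P" using d Delta_P by auto
  have dPhi: "\<delta> \<in> \<Phi>" using d Delta_sub by auto
  show "inv_set \<Phi> \<Delta> (rrefl \<delta> \<circ> u) = insert \<delta> (rrefl \<delta> ` inv_set \<Phi> \<Delta> u)"
  proof (rule set_eqI, rule iffI)
    fix \<beta> assume "\<beta> \<in> inv_set \<Phi> \<Delta> (rrefl \<delta> \<circ> u)"
    then obtain n where b: "\<beta> \<in> P" "n \<in> N" "\<beta> = rrefl \<delta> (u n)" by (auto simp: inv_alt)
    show "\<beta> \<in> insert \<delta> (rrefl \<delta> ` inv_set \<Phi> \<Delta> u)"
    proof (cases "\<beta> = \<delta>")
      case False
      then have "rrefl \<delta> \<beta> \<in> P" using P3 d b by blast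
      moreover have "rrefl \<delta> \<beta> = u n" using b dnz by simp
      ultimately have "rrefl \<delta> \<beta> \<in> inv_set \<Phi> \<Delta> u" using b by (auto simp: inv_alt)
      then have "rrefl \<delta> (rrefl \<delta> \<beta>) \<in> rrefl \<delta> ` inv_set \<Phi> \<Delta> u" by blast
      then show ?thesis using dnz by simp
    qed simp
  next
    fix \<beta> assume h: "\<beta> \<in> insert \<delta> (rrefl \<delta> ` inv_set \<Phi> \<Delta> u)"
    show "\<beta> \<in> inv_set \<Phi> \<Delta> (rrefl \<delta> \<circ> u)"
    proof (cases "\<beta> = \<delta>")
      case True
      have "- \<delta> \<in> u ` N" using W_notN_negN u dPhi nd by blast
      then obtain n where n: "n \<in> N" "u n = - \<delta>" by auto
      then have "(rrefl \<delta> \<circ> u) n = \<delta>" using dnz by (simp add: rrefl_neg)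
      then have "\<delta> \<in> (rrefl \<delta> \<circ> u) ` N" using n(1) by (metis image_eqI)
      then show ?thesis using True dP by (simp add: inv_alt)
    next
      case False
      then obtain \<gamma> where g: "\<gamma> \<in> P" "\<gamma> \<in> u ` N" "\<beta> = rrefl \<delta> \<gamma>" using h by (auto simp: inv_alt)
      have "\<gamma> \<noteq> \<delta>" using g nd by blast
      then have "\<beta> \<in> P" using P3 d g by blast
      moreover have "\<beta> \<in> (rrefl \<delta> \<circ> u) ` N" using g by (auto simp: image_comp[symmetric])
      ultimately show ?thesis by (simp add: inv_alt)
    qed
  qed
  show "\<delta> \<notin> rrefl \<delta> ` inv_set \<Phi> \<Delta> u"
  proof
    assume "\<delta> \<in> rrefl \<delta> ` inv_set \<Phi> \<Delta> u"
    then obtain \<gamma> where "\<gamma> \<in> P" "\<delta> = rrefl \<delta> \<gamma>" by (auto simp: inv_alt)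
    then have "\<gamma> = - \<delta>" using dnz by (metis rrefl_invol rrefl_self)
    then show False using \<open>\<gamma> \<in> P\<close> dP PN_disj N_iff by auto
  qed
qed

end

context RS begin

lemma reduced_card:
  "set ds \<subseteq> \<Delta> \<Longrightarrow> (\<forall>es. set es \<subseteq> \<Delta> \<and> wd es = wd ds \<longrightarrow> length ds \<le> length es)
   \<Longrightarrow> card (inv_set \<Phi> \<Delta> (wd ds)) = length ds"
proof (induction ds)
  case Nil
  have "inv_set \<Phi> \<Delta> id = {}" using PN_disj by (auto simp: inv_alt)
  then show ?case by (simp add: id_def)
next
  case (Cons \<delta> ds)
  have sd: "set ds \<subseteq> \<Delta>" and d: "\<delta> \<in> \<Delta>" using Cons.prems(1) by auto
  have dnz: "\<delta> \<noteq> 0" using d Delta_sub nz by auto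
  have min: "\<forall>es. set es \<subseteq> \<Delta> \<and> wd es = wd ds \<longrightarrow> length ds \<le> length es"
  proof (intro allI impI)
    fix es assume h: "set es \<subseteq> \<Delta> \<and> wd es = wd ds"
    then have "set (\<delta> # es) \<subseteq> \<Delta> \<and> wd (\<delta> # es) = wd (\<delta> # ds)" using d by simp
    then have "length (\<delta> # ds) \<le> length (\<delta> # es)" using Cons.prems(2) by blast
    then show "length ds \<le> length es" by simp
  qed
  have IH: "card (inv_set \<Phi> \<Delta> (wd ds)) = length ds" using Cons.IH[OF sd min] .
  have uW: "wd ds \<in> W" using wd_W sd Delta_sub by blast
  have nd: "\<delta> \<notin> wd ds ` N"
  proof
    assume "\<delta> \<in> wd ds ` N"
    then obtain es where es: "set es \<subseteq> set ds" "length es < length ds" "rrefl \<delta> \<circ> wd ds = wd es"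
      using exch[OF sd] d Delta_P by blast
    then have "set es \<subseteq> \<Delta> \<and> wd es = wd (\<delta> # ds)" using sd by auto
    then have "length (\<delta> # ds) \<le> length es" using Cons.prems(2) by blast
    then show False using es(2) by simp
  qed
  have eqi: "inv_set \<Phi> \<Delta> (wd (\<delta> # ds)) = insert \<delta> (rrefl \<delta> ` inv_set \<Phi> \<Delta> (wd ds))"
    using inv_step(1)[OF uW d nd] by (simp only: wd_Cons)
  have "\<delta> \<notin> rrefl \<delta> ` inv_set \<Phi> \<Delta> (wd ds)" using inv_step(2)[OF uW d nd] .
  moreover have "card (rrefl \<delta> ` inv_set \<Phi> \<Delta> (wd ds)) = card (inv_set \<Phi> \<Delta> (wd ds))"
    using inj_rrefl[OF dnz] by (metis card_image inj_on_subset subset_UNIV)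
  moreover have "finite (rrefl \<delta> ` inv_set \<Phi> \<Delta> (wd ds))" using fin_inv by blast
  ultimately show ?case unfolding eqi using IH by (simp only: card_insert_disjoint) simp
qed

lemma wlen_card: assumes "w \<in> W" shows "wlen \<Delta> w = card (inv_set \<Phi> \<Delta> w)"
proof -
  define Q where "Q n \<longleftrightarrow> (\<exists>ds. length ds = n \<and> set ds \<subseteq> \<Delta> \<and> w = wd ds)" for n
  have wl: "wlen \<Delta> w = (LEAST n. Q n)" by (simp add: wlen_def wd_def Q_def)
  obtain ds0 where "set ds0 \<subseteq> \<Delta>" "w = wd ds0" using W_word assms by blast
  then have "Q (length ds0)" unfolding Q_def by blast
  then have "Q (LEAST n. Q n)" by (rule LeastI)
  then obtain ds where ds: "length ds = wlen \<Delta> w" "set ds \<subseteq> \<Delta>" "w = wd ds" unfolding Q_def wl by blast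
  have "\<forall>es. set es \<subseteq> \<Delta> \<and> wd es = wd ds \<longrightarrow> length ds \<le> length es"
  proof (intro allI impI)
    fix es assume "set es \<subseteq> \<Delta> \<and> wd es = wd ds"
    then have "Q (length es)" unfolding Q_def using ds by auto
    then show "length ds \<le> length es" using ds(1) wl by (simp add: Least_le)
  qed
  then show ?thesis using reduced_card ds by simp
qed

lemma residue_refl: "residue \<alpha> (rrefl \<alpha> \<beta>) = residue \<alpha> \<beta>"
proof -
  define k where "k = 2 * (\<beta> \<bullet> \<alpha>) / (\<alpha> \<bullet> \<alpha>)"
  have "rrefl \<alpha> \<beta> = \<beta> - k *\<^sub>R \<alpha>" by (simp add: rrefl_def k_def)
  show ?thesis unfolding residue_def
  proof (rule set_eqI, rule iffI)
    fix x assume "x \<in> {rrefl \<alpha> \<beta> + c *\<^sub>R \<alpha> |c. True}"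
    then obtain c where "x = rrefl \<alpha> \<beta> + c *\<^sub>R \<alpha>" by blast
    then have "x = \<beta> + (c - k) *\<^sub>R \<alpha>" using \<open>rrefl \<alpha> \<beta> = \<beta> - k *\<^sub>R \<alpha>\<close> by (simp add: algebra_simps)
    then show "x \<in> {\<beta> + c *\<^sub>R \<alpha> |c. True}" by blast
  next
    fix x assume "x \<in> {\<beta> + c *\<^sub>R \<alpha> |c. True}"
    then obtain c where "x = \<beta> + c *\<^sub>R \<alpha>" by blast
    then have "x = rrefl \<alpha> \<beta> + (c + k) *\<^sub>R \<alpha>" using \<open>rrefl \<alpha> \<beta> = \<beta> - k *\<^sub>R \<alpha>\<close> by (simp add: algebra_simps)
    then show "x \<in> {rrefl \<alpha> \<beta> + c *\<^sub>R \<alpha> |c. True}" by blast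
  qed
qed

end

context RS begin

lemma inj_lemma:
  assumes w: "w \<in> W" and a: "\<alpha> \<in> P" and na: "\<alpha> \<notin> w ` N"
  defines "g \<equiv> (\<lambda>\<beta>. if rrefl \<alpha> \<beta> \<in> P then \<beta> else rrefl \<alpha> \<beta>)"
  shows "inj_on g (insert (- \<alpha>) (inv_set \<Phi> \<Delta> w))"
    and "g ` insert (- \<alpha>) (inv_set \<Phi> \<Delta> w) \<subseteq> rrefl \<alpha> ` inv_set \<Phi> \<Delta> (rrefl \<alpha> \<circ> w)"
    and "\<And>x. residue \<alpha> (g x) = residue \<alpha> x"
proof -
  have aPhi: "\<alpha> \<in> \<Phi>" using a P_sub by auto
  have anz: "\<alpha> \<noteq> 0" using aPhi nz by auto
  let ?s = "rrefl \<alpha>"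
  have naP: "- \<alpha> \<notin> P" using a PN_disj N_iff by auto
  have memA: "x \<in> ?s ` inv_set \<Phi> \<Delta> (?s \<circ> w)" if "?s x \<in> P" "x \<in> w ` N" for x
  proof -
    have "?s x \<in> (?s \<circ> w) ` N" using that(2) by (auto simp: image_comp[symmetric])
    then have "?s x \<in> inv_set \<Phi> \<Delta> (?s \<circ> w)" using that(1) by (simp add: inv_alt)
    then have "?s (?s x) \<in> ?s ` inv_set \<Phi> \<Delta> (?s \<circ> w)" by blast
    then show ?thesis using anz by simp
  qed
  show "\<And>x. residue \<alpha> (g x) = residue \<alpha> x" unfolding g_def by (simp add: residue_refl)
  show "g ` insert (- \<alpha>) (inv_set \<Phi> \<Delta> w) \<subseteq> ?s ` inv_set \<Phi> \<Delta> (?s \<circ> w)"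
  proof safe
    have sa: "?s (- \<alpha>) = \<alpha>" using anz by (simp add: rrefl_neg)
    have "- \<alpha> \<in> w ` N" using W_notN_negN w aPhi na by blast
    then show "g (- \<alpha>) \<in> ?s ` inv_set \<Phi> \<Delta> (?s \<circ> w)" using memA sa a unfolding g_def by simp
  next
    fix \<beta> assume "\<beta> \<in> inv_set \<Phi> \<Delta> w"
    then have bP: "\<beta> \<in> P" and bN: "\<beta> \<in> w ` N" by (auto simp: inv_alt)
    show "g \<beta> \<in> ?s ` inv_set \<Phi> \<Delta> (?s \<circ> w)"
    proof (cases "?s \<beta> \<in> P")
      case True then show ?thesis using memA bN unfolding g_def by simp
    next
      case False
      have bPhi: "\<beta> \<in> \<Phi>" using bP P_sub by auto
      have sPhi: "?s \<beta> \<in> \<Phi>" using refl_mem aPhi bPhi by blast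
      define k where "k = 2 * (\<beta> \<bullet> \<alpha>) / (\<alpha> \<bullet> \<alpha>)"
      have sb: "?s \<beta> = \<beta> - k *\<^sub>R \<alpha>" by (simp add: rrefl_def k_def)
      have sN: "?s \<beta> \<in> N" using False sPhi Phi_split by blast
      have kpos: "k > 0"
      proof (rule ccontr)
        assume "\<not> k > 0"
        then have "pc ((- k) *\<^sub>R \<alpha>)" using pc_scale[OF P_pc[OF a], of "- k"] by simp
        then have "pc (\<beta> + (- k) *\<^sub>R \<alpha>)" using pc_add P_pc[OF bP] by blast
        then have "pc (?s \<beta>)" by (simp add: sb)
        moreover have "pc (- ?s \<beta>)" using sN N_iff P_pc by blast
        ultimately have "?s \<beta> = 0" using pc_antisym by blast
        then show False using sPhi zero_notin by simp
      qed
      obtain \<gamma> where g: "\<gamma> \<in> N" "\<beta> = w \<gamma>" using bN by auto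
      obtain \<eta> where e: "\<eta> \<in> \<Phi>" "\<alpha> = w \<eta>" using W_img[OF w] aPhi by (metis imageE)
      have eN: "\<eta> \<notin> N" using e na by blast
      then have eP: "\<eta> \<in> P" using Phi_split e(1) by blast
      obtain \<zeta> where z: "\<zeta> \<in> \<Phi>" "?s \<beta> = w \<zeta>" using W_img[OF w] sPhi by (metis imageE)
      have "w (\<gamma> - k *\<^sub>R \<eta>) = \<beta> - k *\<^sub>R \<alpha>" using W_lin[OF w] g e by (simp add: linear_diff linear_scale)
      then have "w (\<gamma> - k *\<^sub>R \<eta>) = w \<zeta>" using z sb by simp
      then have zeq: "\<zeta> = \<gamma> - k *\<^sub>R \<eta>" using W_inj[OF w] by (metis injD)
      have "pc (k *\<^sub>R \<eta>)" using pc_scale P_pc[OF eP] kpos by simp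
      moreover have "pc (- \<gamma>)" using g(1) N_iff P_pc by blast
      ultimately have "pc (- \<gamma> + k *\<^sub>R \<eta>)" using pc_add by blast
      then have "pc (- \<zeta>)" by (simp add: zeq)
      then have "\<zeta> \<in> N" using pcneg_in_N z(1) by blast
      then have "?s \<beta> \<in> w ` N" using z by blast
      moreover have "?s (?s \<beta>) \<in> P" using anz bP by simp
      ultimately have "?s \<beta> \<in> ?s ` inv_set \<Phi> \<Delta> (?s \<circ> w)" using memA by blast
      then show ?thesis using False unfolding g_def by simp
    qed
  qed
  show "inj_on g (insert (- \<alpha>) (inv_set \<Phi> \<Delta> w))"
  proof (rule inj_onI)
    fix x y assume x: "x \<in> insert (- \<alpha>) (inv_set \<Phi> \<Delta> w)" and y: "y \<in> insert (- \<alpha>) (inv_set \<Phi> \<Delta> w)"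
      and eq: "g x = g y"
    have sa: "?s (- \<alpha>) = \<alpha>" using anz by (simp add: rrefl_neg)
    have aI: "\<alpha> \<notin> inv_set \<Phi> \<Delta> w" using na by (simp add: inv_alt)
    have inP: "z \<in> P" if "z \<in> insert (- \<alpha>) (inv_set \<Phi> \<Delta> w)" "?s z \<notin> P" for z
      using that sa a by (auto simp: inv_alt)
    have stayP: "z \<in> insert (- \<alpha>) (inv_set \<Phi> \<Delta> w) \<Longrightarrow> ?s z \<in> P \<Longrightarrow> z \<in> P \<or> z = - \<alpha>" for z
      by (auto simp: inv_alt)
    have key: False if "u \<in> insert (- \<alpha>) (inv_set \<Phi> \<Delta> w)" "v \<in> insert (- \<alpha>) (inv_set \<Phi> \<Delta> w)"
      "?s u \<in> P" "?s v \<notin> P" "u = ?s v" for u v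
    proof -
      have "v \<in> P" using inP that(2,4) by blast
      have "u \<in> P \<or> u = - \<alpha>" using stayP that(1,3) by blast
      then show False
      proof
        assume "u \<in> P" then show False using that(4,5) anz by simp
      next
        assume "u = - \<alpha>"
        then have "v = \<alpha>" using that(5) anz by (metis rrefl_invol sa)
        then show False using that(2) aI naP \<open>v \<in> P\<close> by auto
      qed
    qed
    show "x = y"
    proof (cases "?s x \<in> P")
      case cx: True
      show ?thesis
      proof (cases "?s y \<in> P")
        case True then show ?thesis using eq cx unfolding g_def by simp
      next
        case False
        then have "x = ?s y" using eq cx unfolding g_def by simp
        then show ?thesis using key[OF x y cx False] by blast
      qed
    next
      case cx: False
      show ?thesis
      proof (cases "?s y \<in> P")
        case True
        then have "y = ?s x" using eq cx unfolding g_def by simp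
        then show ?thesis using key[OF y x True cx] by blast
      next
        case False
        then have "?s x = ?s y" using eq cx unfolding g_def by simp
        then have "?s (?s x) = ?s (?s y)" by simp
        then show ?thesis using anz by simp
      qed
    qed
  qed
qed

end

theorem mainTheorem13:
  fixes \<Phi> \<Delta> :: "'a::euclidean_space set" and w :: "'a \<Rightarrow> 'a" and \<alpha> :: 'a
  assumes "root_system \<Phi>" and "simple_system \<Phi> \<Delta>"
    and "w \<in> weyl_group \<Phi>" and "\<alpha> \<in> positive_roots \<Phi> \<Delta>"
    and "bruhat_less \<Phi> \<Delta> w (rrefl \<alpha> \<circ> w)"
    and "wlen \<Delta> (rrefl \<alpha> \<circ> w) = wlen \<Delta> w + 1"
  shows "image_mset (residue \<alpha>) (mset_set (inv_set \<Phi> \<Delta> (rrefl \<alpha> \<circ> w)))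
       = image_mset (residue \<alpha>) (add_mset \<alpha> (image_mset (rrefl \<alpha>) (mset_set (inv_set \<Phi> \<Delta> w))))"
proof -
  interpret RS \<Phi> \<Delta> using assms(1,2) by unfold_locales
  let ?s = "rrefl \<alpha>"
  let ?res = "residue \<alpha>"
  let ?I0 = "inv_set \<Phi> \<Delta> w"
  let ?I1 = "inv_set \<Phi> \<Delta> (?s \<circ> w)"
  have w: "w \<in> W" using assms(3) .
  have a: "\<alpha> \<in> P" using assms(4) .
  have aPhi: "\<alpha> \<in> \<Phi>" using a P_sub by auto
  have anz: "\<alpha> \<noteq> 0" using aPhi nz by auto
  have sw: "?s \<circ> w \<in> W" using weyl_group.intros(2)[OF aPhi w] .
  have hc: "card ?I1 = card ?I0 + 1" using assms(6) wlen_card[OF w] wlen_card[OF sw] by simp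
  have ssw: "?s \<circ> (?s \<circ> w) = w" using anz by (auto simp: fun_eq_iff)
  have cardA: "card (?s ` inv_set \<Phi> \<Delta> (?s \<circ> v)) = card (inv_set \<Phi> \<Delta> (?s \<circ> v))" for v
    using inj_rrefl[OF anz] by (metis card_image inj_on_subset subset_UNIV)
  have aI: "- \<alpha> \<notin> inv_set \<Phi> \<Delta> v" for v using a PN_disj N_iff by (auto simp: inv_alt)
  have cardB: "card (insert (- \<alpha>) (inv_set \<Phi> \<Delta> v)) = card (inv_set \<Phi> \<Delta> v) + 1" for v
    using aI[of v] fin_inv[of v] by simp
  have finA: "finite (?s ` inv_set \<Phi> \<Delta> (?s \<circ> v))" for v using fin_inv by blast
  have finB: "finite (insert (- \<alpha>) (inv_set \<Phi> \<Delta> v))" for v using fin_inv by blast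
  have cardle: "card (inv_set \<Phi> \<Delta> v) + 1 \<le> card (inv_set \<Phi> \<Delta> (?s \<circ> v))"
    if "v \<in> W" "\<alpha> \<notin> v ` N" for v
  proof -
    have "card (insert (- \<alpha>) (inv_set \<Phi> \<Delta> v)) \<le> card (?s ` inv_set \<Phi> \<Delta> (?s \<circ> v))"
      using card_inj_on_le[OF inj_lemma(1)[OF that(1) a that(2)] inj_lemma(2)[OF that(1) a that(2)] finA] .
    then show ?thesis using cardA cardB by simp
  qed
  have na: "\<alpha> \<notin> w ` N"
  proof
    assume h: "\<alpha> \<in> w ` N"
    have "\<alpha> \<notin> (?s \<circ> w) ` N"
    proof
      assume "\<alpha> \<in> (?s \<circ> w) ` N"
      then obtain n where n: "n \<in> N" "\<alpha> = ?s (w n)" by auto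
      then have "w n = - \<alpha>" using anz by (metis rrefl_invol rrefl_self)
      then have "w (- n) = \<alpha>" using W_neg[OF w] by simp
      moreover have "- n \<in> P" using n(1) N_iff by simp
      ultimately have "\<alpha> \<in> w ` P" by (metis image_eqI)
      then show False using W_P_or_N[OF w aPhi] h by blast
    qed
    from cardle[OF sw this] have "card ?I1 + 1 \<le> card ?I0" using ssw by simp
    then show False using hc by simp
  qed
  define g where "g = (\<lambda>\<beta>. if ?s \<beta> \<in> P then \<beta> else ?s \<beta>)"
  let ?B = "insert (- \<alpha>) ?I0"
  let ?A = "?s ` ?I1"
  have ginj: "inj_on g ?B" using inj_lemma(1)[OF w a na] unfolding g_def .
  have gsub: "g ` ?B \<subseteq> ?A" using inj_lemma(2)[OF w a na] unfolding g_def .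
  have gres: "?res (g x) = ?res x" for x using inj_lemma(3)[OF w a na] unfolding g_def .
  have "card (g ` ?B) = card ?A" using card_image[OF ginj] cardB cardA hc by simp
  then have gB: "g ` ?B = ?A" using card_subset_eq[OF finA gsub] by simp
  have resA: "?res (- \<alpha>) = ?res \<alpha>" using residue_refl[of \<alpha> \<alpha>] anz by simp
  have "image_mset ?res (mset_set ?I1) = image_mset (?res \<circ> ?s) (mset_set ?I1)"
    by (rule image_mset_cong) (simp add: residue_refl)
  also have "\<dots> = image_mset ?res (image_mset ?s (mset_set ?I1))" by (simp add: image_mset.compositionality)
  also have "\<dots> = image_mset ?res (mset_set ?A)"
    using image_mset_mset_set[of ?s ?I1] inj_rrefl[OF anz] by (metis inj_on_subset subset_UNIV)
  also have "\<dots> = image_mset ?res (mset_set (g ` ?B))" using gB by simp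
  also have "\<dots> = image_mset ?res (image_mset g (mset_set ?B))" using image_mset_mset_set[OF ginj] by simp
  also have "\<dots> = image_mset (?res \<circ> g) (mset_set ?B)" by (simp add: image_mset.compositionality)
  also have "\<dots> = image_mset ?res (mset_set ?B)" by (rule image_mset_cong) (simp add: gres)
  also have "\<dots> = add_mset (?res (- \<alpha>)) (image_mset ?res (mset_set ?I0))"
    using aI[of w] fin_inv[of w] by simp
  also have "\<dots> = add_mset (?res \<alpha>) (image_mset (?res \<circ> ?s) (mset_set ?I0))"
    using resA by (simp add: residue_refl comp_def)
  also have "\<dots> = image_mset ?res (add_mset \<alpha> (image_mset ?s (mset_set ?I0)))"
    by (simp add: image_mset.compositionality)
  finally show ?thesis .
qed

end
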